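(* Let $A_1,\ldots,A_N$ be rank-deficient real matrices, each with columns of Euclidean norm $1$. Then \[ \mathrm{spark}(A_1\otimes\cdots\otimes A_N)=\min_{1\le i\le N}\mathrm{spark}(A_i). \]
   Context: $\otimes$ denotes the Kronecker product: for $A\in\mathbb{R}^{p,q}$, $B\in\mathbb{R}^{r,s}$, $A\otimes B\in\mathbb{R}^{pr,qs}$ is the block matrix with $(i,j)$ block $a_{i,j}B$. A matrix is rank-deficient if its rank is less than the minimum of its numbers of rows and columns. The spark of a matrix whose columns are linearly dependent is the smallest cardinality of a linearly dependent subset of its columns. *)

theory Defs
  imports "Jordan_Normal_Form.DL_Rank"
begin

definition kron :: "real mat \<Rightarrow> real mat \<Rightarrow> real mat" where
  "kron A B = mat (dim_row A * dim_row B) (dim_col A * dim_col B)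
     (\<lambda>(i, j). A $$ (i div dim_row B, j div dim_col B) * B $$ (i mod dim_row B, j mod dim_col B))"

fun kron_list :: "real mat list \<Rightarrow> real mat" where
  "kron_list [] = 1\<^sub>m 1"
| "kron_list [A] = A"
| "kron_list (A # B # As) = kron A (kron_list (B # As))"

text \<open>A set J of column indices is linearly dependent (columns indexed, so repeated columns count separately).\<close>
definition cols_dependent :: "real mat \<Rightarrow> nat set \<Rightarrow> bool" where
  "cols_dependent A J \<longleftrightarrow> J \<subseteq> {..<dim_col A} \<and>
     (\<exists>c :: nat \<Rightarrow> real. (\<exists>j\<in>J. c j \<noteq> 0) \<and>
        (\<forall>i<dim_row A. (\<Sum>j\<in>J. c j * A $$ (i, j)) = 0))"

definition spark :: "real mat \<Rightarrow> nat" where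
  "spark A = (LEAST k. \<exists>J. cols_dependent A J \<and> card J = k)"

definition rank_deficient :: "real mat \<Rightarrow> bool" where
  "rank_deficient A \<longleftrightarrow> vec_space.rank (dim_row A) A < min (dim_row A) (dim_col A)"

definition unit_norm_cols :: "real mat \<Rightarrow> bool" where
  "unit_norm_cols A \<longleftrightarrow> (\<forall>j<dim_col A. sqrt (\<Sum>i<dim_row A. (A $$ (i, j))\<^sup>2) = 1)"

end

theory Submission imports Defs begin

lemma rd_dep:
  fixes A :: "real mat"
  assumes "vec_space.rank (dim_row A) A < dim_col A"
  shows "\<exists>J. cols_dependent A J"
proof (cases "distinct (cols A)")
  case False
  then obtain i j where ij: "i < dim_col A" "j < dim_col A" "i \<noteq> j" "col A i = col A j"
    by (metis cols_length cols_nth distinct_conv_nth)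
  define c where "c = (\<lambda>x. if x = i then 1 else if x = j then -1 else (0::real))"
  have "cols_dependent A {i,j}"
    unfolding cols_dependent_def
  proof (intro conjI exI[where x=c])
    show "{i, j} \<subseteq> {..<dim_col A}" using ij by auto
    show "\<exists>x\<in>{i,j}. c x \<noteq> 0" unfolding c_def by auto
    show "\<forall>r<dim_row A. (\<Sum>x\<in>{i, j}. c x * A $$ (r, x)) = 0"
    proof (intro allI impI)
      fix r assume r: "r < dim_row A"
      have "A $$ (r,i) = A $$ (r,j)" using ij(4) r ij by (metis col_def index_vec)
      then show "(\<Sum>x\<in>{i, j}. c x * A $$ (r, x)) = 0" using ij(3) unfolding c_def by simp
    qed
  qed
  then show ?thesis by blast
next
  case True
  interpret vec_space "TYPE(real)" "dim_row A" .
  have car: "A \<in> carrier_mat (dim_row A) (dim_col A)" by auto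
  have "\<not> lin_indpt (set (cols A))"
    using lin_indpt_full_rank[OF car True] assms by auto
  then obtain v where v: "v \<in> carrier_vec (dim_col A)" "v \<noteq> 0\<^sub>v (dim_col A)" "A *\<^sub>v v = 0\<^sub>v (dim_row A)"
    using lin_depE[OF car _ True] by blast
  obtain k where k: "k < dim_col A" "v $ k \<noteq> 0" using v(1,2)
    by (metis carrier_vecD eq_vecI index_zero_vec(1) index_zero_vec(2))
  have "cols_dependent A {..<dim_col A}"
    unfolding cols_dependent_def
  proof (intro conjI exI[where x="\<lambda>x. v $ x"])
    show "\<exists>x\<in>{..<dim_col A}. v $ x \<noteq> 0" using k by auto
    show "\<forall>r<dim_row A. (\<Sum>x\<in>{..<dim_col A}. v $ x * A $$ (r, x)) = 0"
    proof (intro allI impI)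
      fix r assume r: "r < dim_row A"
      have "(A *\<^sub>v v) $ r = 0" using v(3) r by simp
      then show "(\<Sum>x\<in>{..<dim_col A}. v $ x * A $$ (r, x)) = 0"
        using r v(1) unfolding mult_mat_vec_def scalar_prod_def
        by (auto simp: atLeast0LessThan mult.commute intro: sum.cong)
    qed
  qed simp
  then show ?thesis by blast
qed

lemma spark_le: "cols_dependent A J \<Longrightarrow> spark A \<le> card J"
  unfolding spark_def by (rule Least_le) blast

lemma spark_ex: "cols_dependent A J \<Longrightarrow> \<exists>J0. cols_dependent A J0 \<and> card J0 = spark A"
  unfolding spark_def by (rule LeastI_ex) blast

lemma kron_dims[simp]: "dim_row (kron A B) = dim_row A * dim_row B"
  "dim_col (kron A B) = dim_col A * dim_col B"
  unfolding kron_def by auto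

lemma kron_idx: "i < dim_row A * dim_row B \<Longrightarrow> j < dim_col A * dim_col B \<Longrightarrow>
  kron A B $$ (i,j) = A $$ (i div dim_row B, j div dim_col B) * B $$ (i mod dim_row B, j mod dim_col B)"
  unfolding kron_def by auto

lemma upper_A:
  assumes "cols_dependent A J" "dim_col B > 0"
  shows "cols_dependent (kron A B) ((\<lambda>j. j * dim_col B) ` J)"
proof -
  let ?q = "dim_col B"
  from assms(1) obtain c where J: "J \<subseteq> {..<dim_col A}" "\<exists>j\<in>J. c j \<noteq> 0"
    "\<forall>i<dim_row A. (\<Sum>j\<in>J. c j * A $$ (i, j)) = 0"
    unfolding cols_dependent_def by blast
  have inj: "inj_on (\<lambda>j. j * ?q) J" using assms(2) by (auto simp: inj_on_def)
  show ?thesis unfolding cols_dependent_def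
  proof (intro conjI exI[where x="\<lambda>x. c (x div ?q)"])
    show "(\<lambda>j. j * ?q) ` J \<subseteq> {..<dim_col (kron A B)}"
      using J(1) assms(2) by auto
    show "\<exists>x\<in>(\<lambda>j. j * ?q) ` J. c (x div ?q) \<noteq> 0" using J(2) assms(2) by auto
    show "\<forall>i<dim_row (kron A B). (\<Sum>x\<in>(\<lambda>j. j * ?q) ` J. c (x div ?q) * kron A B $$ (i, x)) = 0"
    proof (intro allI impI)
      fix i assume i: "i < dim_row (kron A B)"
      then have n: "dim_row B > 0" by (auto intro: Nat.gr0I)
      have idiv: "i div dim_row B < dim_row A" using i by (simp add: less_mult_imp_div_less)
      have "(\<Sum>x\<in>(\<lambda>j. j * ?q) ` J. c (x div ?q) * kron A B $$ (i, x))
          = (\<Sum>j\<in>J. c j * kron A B $$ (i, j * ?q))"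
        using inj assms(2) by (simp add: sum.reindex)
      also have "\<dots> = (\<Sum>j\<in>J. (c j * A $$ (i div dim_row B, j)) * B $$ (i mod dim_row B, 0))"
      proof (rule sum.cong)
        fix j assume "j \<in> J"
        then have "j * ?q < dim_col A * ?q" using J(1) assms(2) by auto
        then show "c j * kron A B $$ (i, j * ?q) = (c j * A $$ (i div dim_row B, j)) * B $$ (i mod dim_row B, 0)"
          using i assms(2) by (simp add: kron_idx)
      qed simp
      also have "\<dots> = 0" using J(3) idiv by (simp add: sum_distrib_right[symmetric])
      finally show "(\<Sum>x\<in>(\<lambda>j. j * ?q) ` J. c (x div ?q) * kron A B $$ (i, x)) = 0" .
    qed
  qed
qed

lemma upper_B:
  assumes "cols_dependent B K" "dim_col A > 0"
  shows "cols_dependent (kron A B) K"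
proof -
  let ?q = "dim_col B"
  from assms(1) obtain c where K: "K \<subseteq> {..<dim_col B}" "\<exists>j\<in>K. c j \<noteq> 0"
    "\<forall>i<dim_row B. (\<Sum>j\<in>K. c j * B $$ (i, j)) = 0"
    unfolding cols_dependent_def by blast
  show ?thesis unfolding cols_dependent_def
  proof (intro conjI exI[where x="c"])
    show "K \<subseteq> {..<dim_col (kron A B)}"
      using K(1) assms(2) by (auto intro: less_le_trans)
    show "\<exists>x\<in>K. c x \<noteq> 0" using K(2) by auto
    show "\<forall>i<dim_row (kron A B). (\<Sum>x\<in>K. c x * kron A B $$ (i, x)) = 0"
    proof (intro allI impI)
      fix i assume i: "i < dim_row (kron A B)"
      then have n: "dim_row B > 0" by (auto intro: Nat.gr0I)
      have imod: "i mod dim_row B < dim_row B" using n by simp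
      have "(\<Sum>x\<in>K. c x * kron A B $$ (i, x))
          = (\<Sum>x\<in>K. A $$ (i div dim_row B, 0) * (c x * B $$ (i mod dim_row B, x)))"
      proof (rule sum.cong)
        fix x assume "x \<in> K"
        then have x: "x < ?q" using K(1) by auto
        then have "x < dim_col A * ?q" using assms(2) by (auto intro: less_le_trans)
        then show "c x * kron A B $$ (i, x) = A $$ (i div dim_row B, 0) * (c x * B $$ (i mod dim_row B, x))"
          using i x by (simp add: kron_idx)
      qed simp
      also have "\<dots> = 0" using K(3) imod by (simp add: sum_distrib_left[symmetric])
      finally show "(\<Sum>x\<in>K. c x * kron A B $$ (i, x)) = 0" .
    qed
  qed
qed

lemma sum_split_prod:
  fixes h :: "nat \<Rightarrow> real"
  shows "(\<Sum>x<p*q. h x) = (\<Sum>j<p. \<Sum>k<q. h (j*q+k))"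
proof (induction p)
  case 0 then show ?case by simp
next
  case (Suc p)
  have "(\<Sum>x<Suc p*q. h x) = (\<Sum>x<p*q. h x) + (\<Sum>x\<in>{p*q..<p*q+q}. h x)"
  proof -
    have e: "Suc p * q = p*q + q" by simp
    show ?thesis unfolding e lessThan_atLeast0
      using sum.atLeastLessThan_concat[of 0 "p*q" "p*q+q" h] by simp
  qed
  also have "(\<Sum>x\<in>{p*q..<p*q+q}. h x) = (\<Sum>k<q. h (p*q+k))"
    using sum.shift_bounds_nat_ivl[of h 0 "p*q" q] by (simp add: lessThan_atLeast0 add.commute)
  finally show ?case using Suc by simp
qed

lemma lower:
  assumes q: "dim_col B > 0" and dep: "cols_dependent (kron A B) J"
  shows "min (spark A) (spark B) \<le> card J"
proof -
  define m where "m = dim_row A"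
  define n where "n = dim_row B"
  define p where "p = dim_col A"
  define q where "q = dim_col B"
  have q0: "q > 0" using q q_def by simp
  from dep obtain c where J: "J \<subseteq> {..<p*q}" "\<exists>x\<in>J. c x \<noteq> 0"
    "\<forall>i<m*n. (\<Sum>x\<in>J. c x * kron A B $$ (i, x)) = 0"
    unfolding cols_dependent_def m_def n_def p_def q_def by auto
  define S where "S = {x\<in>J. c x \<noteq> 0}"
  define X where "X = (\<lambda>j k. if j*q+k \<in> S then c (j*q+k) else 0)"
  have finJ: "finite J" using J(1) finite_subset by blast
  have SJ: "S \<subseteq> J" unfolding S_def by auto
  have cardS: "card S \<le> card J" using SJ finJ by (simp add: card_mono)
  have key: "(\<Sum>j<p. \<Sum>k<q. X j k * A $$ (r,j) * B $$ (s,k)) = 0" if r: "r < m" and s: "s < n" for r s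
  proof -
    have i: "r*n+s < m*n"
    proof -
      have "r*n+s < r*n + n" using s by simp
      also have "\<dots> = Suc r * n" by simp
      also have "\<dots> \<le> m*n" using r by (intro mult_right_mono) auto
      finally show ?thesis .
    qed
    have dv: "(r*n+s) div n = r" "(r*n+s) mod n = s" using s by auto
    have "0 = (\<Sum>x\<in>J. c x * kron A B $$ (r*n+s, x))" using J(3) i by simp
    also have "\<dots> = (\<Sum>x\<in>J. c x * A $$ (r, x div q) * B $$ (s, x mod q))"
    proof (rule sum.cong)
      fix x assume "x \<in> J"
      then have "x < p*q" using J(1) by auto
      then show "c x * kron A B $$ (r*n+s, x) = c x * A $$ (r, x div q) * B $$ (s, x mod q)"
        using i dv kron_idx[of "r*n+s" A B x] unfolding m_def n_def p_def q_def by simp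
    qed simp
    also have "\<dots> = (\<Sum>x<p*q. if x \<in> S then c x * A $$ (r, x div q) * B $$ (s, x mod q) else 0)"
    proof -
      have "(\<Sum>x\<in>J. c x * A $$ (r, x div q) * B $$ (s, x mod q))
          = (\<Sum>x\<in>J. if x \<in> S then c x * A $$ (r, x div q) * B $$ (s, x mod q) else 0)"
        by (rule sum.cong) (auto simp: S_def)
      also have "\<dots> = (\<Sum>x<p*q. if x \<in> S then c x * A $$ (r, x div q) * B $$ (s, x mod q) else 0)"
        using J(1) SJ by (intro sum.mono_neutral_left) auto
      finally show ?thesis .
    qed
    also have "\<dots> = (\<Sum>j<p. \<Sum>k<q. if j*q+k \<in> S then c (j*q+k) * A $$ (r, (j*q+k) div q) * B $$ (s, (j*q+k) mod q) else 0)"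
      by (rule sum_split_prod)
    also have "\<dots> = (\<Sum>j<p. \<Sum>k<q. X j k * A $$ (r,j) * B $$ (s,k))"
      using q0 by (intro sum.cong refl) (auto simp: X_def)
    finally show ?thesis by simp
  qed
  define Y where "Y = (\<lambda>r k. \<Sum>j<p. X j k * A $$ (r,j))"
  have keyY: "(\<Sum>k<q. Y r k * B $$ (s,k)) = 0" if "r < m" "s < n" for r s
  proof -
    have "(\<Sum>k<q. Y r k * B $$ (s,k)) = (\<Sum>k<q. \<Sum>j<p. X j k * A $$ (r,j) * B $$ (s,k))"
      unfolding Y_def by (simp add: sum_distrib_right)
    also have "\<dots> = (\<Sum>j<p. \<Sum>k<q. X j k * A $$ (r,j) * B $$ (s,k))" by (rule sum.swap)
    finally show ?thesis using key[OF that] by simp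
  qed
  show ?thesis
  proof (cases "\<exists>r<m. \<exists>k<q. Y r k \<noteq> 0")
    case True
    then obtain r k0 where rk: "r < m" "k0 < q" "Y r k0 \<noteq> 0" by blast
    define K where "K = {k\<in>{..<q}. Y r k \<noteq> 0}"
    have "cols_dependent B K" unfolding cols_dependent_def
    proof (intro conjI exI[where x="Y r"])
      show "K \<subseteq> {..<dim_col B}" unfolding K_def q_def by auto
      show "\<exists>j\<in>K. Y r j \<noteq> 0" using rk unfolding K_def by auto
      show "\<forall>i<dim_row B. (\<Sum>j\<in>K. Y r j * B $$ (i, j)) = 0"
      proof (intro allI impI)
        fix s assume s: "s < dim_row B"
        have "(\<Sum>j\<in>K. Y r j * B $$ (s, j)) = (\<Sum>k<q. Y r k * B $$ (s,k))"
          unfolding K_def by (intro sum.mono_neutral_left) auto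
        then show "(\<Sum>j\<in>K. Y r j * B $$ (s, j)) = 0" using keyY[OF rk(1)] s n_def by simp
      qed
    qed
    then have "spark B \<le> card K" by (rule spark_le)
    moreover have "K \<subseteq> (\<lambda>x. x mod q) ` S"
    proof
      fix k assume "k \<in> K"
      then have k: "k < q" "Y r k \<noteq> 0" unfolding K_def by auto
      then obtain j where "j < p" "X j k * A $$ (r,j) \<noteq> 0" unfolding Y_def
        by (metis (no_types, lifting) lessThan_iff sum.neutral)
      then have "j*q+k \<in> S" unfolding X_def by (auto split: if_splits)
      moreover have "(j*q+k) mod q = k" using k by simp
      ultimately show "k \<in> (\<lambda>x. x mod q) ` S" by force
    qed
    then have "card K \<le> card ((\<lambda>x. x mod q) ` S)"
      using finJ SJ by (intro card_mono) (auto intro: finite_subset)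
    moreover have "card ((\<lambda>x. x mod q) ` S) \<le> card S" by (rule card_image_le) (use finJ SJ in \<open>auto intro: finite_subset\<close>)
    ultimately show ?thesis using cardS by linarith
  next
    case False
    then have Y0: "\<And>r k. r < m \<Longrightarrow> k < q \<Longrightarrow> Y r k = 0" by blast
    obtain x0 where x0: "x0 \<in> S" using J(2) S_def by auto
    have x0pq: "x0 < p*q" using x0 SJ J(1) by auto
    define k0 where "k0 = x0 mod q"
    define j0 where "j0 = x0 div q"
    have k0q: "k0 < q" using q0 k0_def by simp
    have j0p: "j0 < p" using x0pq j0_def by (simp add: less_mult_imp_div_less)
    have x0e: "j0*q+k0 = x0" unfolding j0_def k0_def by simp
    define J' where "J' = {j\<in>{..<p}. X j k0 \<noteq> 0}"
    have "cols_dependent A J'" unfolding cols_dependent_def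
    proof (intro conjI exI[where x="\<lambda>j. X j k0"])
      show "J' \<subseteq> {..<dim_col A}" unfolding J'_def p_def by auto
      show "\<exists>j\<in>J'. X j k0 \<noteq> 0" using j0p x0 x0e unfolding J'_def X_def S_def by auto
      show "\<forall>i<dim_row A. (\<Sum>j\<in>J'. X j k0 * A $$ (i, j)) = 0"
      proof (intro allI impI)
        fix r assume r: "r < dim_row A"
        have "(\<Sum>j\<in>J'. X j k0 * A $$ (r, j)) = Y r k0"
          unfolding J'_def Y_def by (intro sum.mono_neutral_left) auto
        then show "(\<Sum>j\<in>J'. X j k0 * A $$ (r, j)) = 0" using Y0 r k0q m_def by simp
      qed
    qed
    then have "spark A \<le> card J'" by (rule spark_le)
    moreover have "card J' \<le> card S"
    proof (rule card_inj_on_le[where f="\<lambda>j. j*q+k0"])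
      show "inj_on (\<lambda>j. j*q+k0) J'" using q0 by (auto simp: inj_on_def)
      show "(\<lambda>j. j*q+k0) ` J' \<subseteq> S" unfolding J'_def X_def by (auto split: if_splits)
      show "finite S" using finJ SJ by (auto intro: finite_subset)
    qed
    ultimately show ?thesis using cardS by linarith
  qed
qed

lemma kron_spark:
  assumes p: "dim_col A > 0" and q: "dim_col B > 0"
    and dA: "cols_dependent A J1" and dB: "cols_dependent B J2"
  shows "spark (kron A B) = min (spark A) (spark B) \<and> (\<exists>J. cols_dependent (kron A B) J)"
proof -
  obtain JA where JA: "cols_dependent A JA" "card JA = spark A" using spark_ex[OF dA] by blast
  obtain JB where JB: "cols_dependent B JB" "card JB = spark B" using spark_ex[OF dB] by blast
  have d1: "cols_dependent (kron A B) ((\<lambda>j. j * dim_col B) ` JA)" by (rule upper_A[OF JA(1) q])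
  have "card ((\<lambda>j. j * dim_col B) ` JA) = card JA"
    using q by (intro card_image) (auto simp: inj_on_def)
  then have le1: "spark (kron A B) \<le> spark A" using spark_le[OF d1] JA(2) by simp
  have d2: "cols_dependent (kron A B) JB" by (rule upper_B[OF JB(1) p])
  have le2: "spark (kron A B) \<le> spark B" using spark_le[OF d2] JB(2) by simp
  obtain JK where JK: "cols_dependent (kron A B) JK" "card JK = spark (kron A B)"
    using spark_ex[OF d2] by blast
  have "min (spark A) (spark B) \<le> spark (kron A B)" using lower[OF q JK(1)] JK(2) by simp
  then show ?thesis using le1 le2 d2 by auto
qed

lemma rd_facts:
  assumes "rank_deficient A"
  shows "dim_col A > 0" "\<exists>J. cols_dependent A J"
  using assms rd_dep unfolding rank_deficient_def by auto

lemma main_ind: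
  "As \<noteq> [] \<Longrightarrow> \<forall>A\<in>set As. rank_deficient A \<Longrightarrow>
   dim_col (kron_list As) > 0 \<and> (\<exists>J. cols_dependent (kron_list As) J) \<and>
   spark (kron_list As) = Min (spark ` set As)"
proof (induction As rule: kron_list.induct)
  case 1 then show ?case by simp
next
  case (2 A) then show ?case using rd_facts[of A] by simp
next
  case (3 A B As)
  have IH: "dim_col (kron_list (B # As)) > 0" "\<exists>J. cols_dependent (kron_list (B # As)) J"
    "spark (kron_list (B # As)) = Min (spark ` set (B # As))"
    using 3 by auto
  have rA: "rank_deficient A" using 3 by simp
  obtain J1 where J1: "cols_dependent A J1" using rd_facts(2)[OF rA] by blast
  obtain J2 where J2: "cols_dependent (kron_list (B # As)) J2" using IH(2) by blast
  have K: "spark (kron A (kron_list (B # As))) = min (spark A) (spark (kron_list (B # As)))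
     \<and> (\<exists>J. cols_dependent (kron A (kron_list (B # As))) J)"
    by (rule kron_spark[OF rd_facts(1)[OF rA] IH(1) J1 J2])
  have "Min (spark ` set (A # B # As)) = min (spark A) (Min (spark ` set (B # As)))"
    by (simp add: Min.insert)
  then show ?case using K IH rd_facts(1)[OF rA] by simp
qed

theorem corollary3p2:
  fixes As :: "real mat list"
  assumes "As \<noteq> []"
    and "\<forall>A\<in>set As. rank_deficient A"
    and "\<forall>A\<in>set As. unit_norm_cols A"
  shows "spark (kron_list As) = Min (spark ` set As)"
  using main_ind[OF assms(1,2)] by simp

end
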